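(* Let $V$ be a vector space and $Mag(V)$ the free unital magmatic algebra with its reduced coproduct $\delta$. For a planar binary rooted tree $t$ with $r$ leaves and $v_1,\dots,v_r\in V$, $$\delta(t;v_1\dots v_r)=\sum_{i=1}^{r-1}(t^i_{(1)};v_1\dots v_i)\otimes(t^i_{(2)};v_{i+1}\dots v_r).$$
   Context: $Mag(V)=\bigoplus_{n\ge0}\mathbb K[Y_{n-1}]\otimes V^{\otimes n}$, $Y_{n-1}$ the set of planar binary rooted trees with $n$ leaves ($n=0$ summand $\mathbb K1$), product $(t;v_1\dots v_p)\cdot(s;v_{p+1}\dots v_{p+q})=(t\vee s;v_1\dots v_{p+q})$ by grafting on a new root. $\Delta$ is the unique linear map with $\Delta(1)=1\otimes1$, $\Delta(v)=v\otimes1+1\otimes v$ ($v\in V$) and $\Delta(x\cdot y)=\Delta(x)\cdot(1\otimes y)+(x\otimes1)\cdot\Delta(y)-x\otimes y$ (componentwise product on the tensor square); $\delta(x)=\Delta(x)-x\otimes1-1\otimes x$ on the augmentation ideal. Splitting: number the leaves of $t$ from $1$ to $r$ left to right; for $1\le i<r$, $t^i_{(1)}$ is the part of $t$ lying on the left of the path from leaf $i$ to the root (this path included) and $t^i_{(2)}$ is the part of $t$ lying on the right of the path from leaf $i+1$ to the root (this path included), each regarded as a planar binary tree (with $i$, resp. $r-i$, leaves) after erasing vertices with only one input. E.g. for $t=(x_1x_2)(x_3x_4)$ split at $i=2$, one gets $x_1x_2$ and $x_3x_4$. *)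

theory Defs
  imports "HOL-Library.Poly_Mapping"
begin

text \<open>Planar binary rooted trees with at least one leaf; leaves may carry labels.
  Unlabelled trees (the set Y) are unit ltree.\<close>
datatype 'x ltree = Lf 'x | Nd "'x ltree" "'x ltree"

type_synonym pbtree = "unit ltree"

fun nleaves :: "'x ltree \<Rightarrow> nat" where
  "nleaves (Lf _) = 1"
| "nleaves (Nd a b) = nleaves a + nleaves b"

text \<open>Part of the tree spanned by its first n leaves (all vertices on the paths from
  leaves 1..n to the root), vertices with one input erased; None if n = 0.\<close>
fun ltake :: "nat \<Rightarrow> 'x ltree \<Rightarrow> 'x ltree option" where
  "ltake n (Lf x) = (if n = 0 then None else Some (Lf x))"
| "ltake n (Nd a b) =
     (if n \<le> nleaves a then ltake n a
      else (case ltake (n - nleaves a) b of None \<Rightarrow> Some a | Some c \<Rightarrow> Some (Nd a c)))"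

text \<open>Part of the tree spanned by the leaves after the n-th one, vertices with one
  input erased; None if no leaf remains.\<close>
fun ldrop :: "nat \<Rightarrow> 'x ltree \<Rightarrow> 'x ltree option" where
  "ldrop n (Lf x) = (if n = 0 then Some (Lf x) else None)"
| "ldrop n (Nd a b) =
     (if nleaves a \<le> n then ldrop (n - nleaves a) b
      else (case ldrop n a of None \<Rightarrow> Some b | Some c \<Rightarrow> Some (Nd c b)))"

text \<open>The splitting: split1 i t = t^i_(1) (left of path from leaf i to the root, path
  included), split2 i t = t^i_(2) (right of path from leaf i+1 to the root, path included).\<close>
definition split1 :: "nat \<Rightarrow> 'x ltree \<Rightarrow> 'x ltree" where
  "split1 i t = the (ltake i t)"
definition split2 :: "nat \<Rightarrow> 'x ltree \<Rightarrow> 'x ltree" where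
  "split2 i t = the (ldrop i t)"

definition smul :: "'k::comm_ring_1 \<Rightarrow> ('a \<Rightarrow>\<^sub>0 'k) \<Rightarrow> ('a \<Rightarrow>\<^sub>0 'k)" where
  "smul c f = Poly_Mapping.map (\<lambda>a. c * a) f"

definition linext :: "('b \<Rightarrow> ('c \<Rightarrow>\<^sub>0 'k::comm_ring_1)) \<Rightarrow> ('b \<Rightarrow>\<^sub>0 'k) \<Rightarrow> ('c \<Rightarrow>\<^sub>0 'k)" where
  "linext g f = (\<Sum>b\<in>Poly_Mapping.keys f. smul (Poly_Mapping.lookup f b) (g b))"

definition bilinext :: "('b \<Rightarrow> 'c \<Rightarrow> ('d \<Rightarrow>\<^sub>0 'k::comm_ring_1)) \<Rightarrow> ('b \<Rightarrow>\<^sub>0 'k) \<Rightarrow> ('c \<Rightarrow>\<^sub>0 'k) \<Rightarrow> ('d \<Rightarrow>\<^sub>0 'k)" where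
  "bilinext g f h = linext (\<lambda>b. linext (\<lambda>c. g b c) h) f"

text \<open>V is the K-vector space with basis 'x, i.e. finitely supported functions 'x to 'k (every vector space is of
  this form).  Mag(V) = direct sum over n of K[Y_{n-1}] \<otimes> V^{\<otimes>n} has as basis the planar binary trees
  with leaves labelled by basis vectors of V, plus the unit (None).\<close>
type_synonym ('x, 'k) mag = "'x ltree option \<Rightarrow>\<^sub>0 'k"
type_synonym ('x, 'k) mag2 = "('x ltree option \<times> 'x ltree option) \<Rightarrow>\<^sub>0 'k"

fun graft :: "'x ltree option \<Rightarrow> 'x ltree option \<Rightarrow> 'x ltree option" where
  "graft None y = y"
| "graft x None = x"
| "graft (Some a) (Some b) = Some (Nd a b)"

definition mag_one :: "('x, 'k::comm_ring_1) mag" where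
  "mag_one = Poly_Mapping.single None 1"

definition mag_bas :: "'x ltree \<Rightarrow> ('x, 'k::comm_ring_1) mag" where
  "mag_bas t = Poly_Mapping.single (Some t) 1"

definition mag_mult :: "('x, 'k::comm_ring_1) mag \<Rightarrow> ('x, 'k) mag \<Rightarrow> ('x, 'k) mag" where
  "mag_mult = bilinext (\<lambda>a b. Poly_Mapping.single (graft a b) 1)"

definition tensor :: "('x, 'k::comm_ring_1) mag \<Rightarrow> ('x, 'k) mag \<Rightarrow> ('x, 'k) mag2" where
  "tensor = bilinext (\<lambda>a b. Poly_Mapping.single (a, b) 1)"

definition mult2 :: "('x, 'k::comm_ring_1) mag2 \<Rightarrow> ('x, 'k) mag2 \<Rightarrow> ('x, 'k) mag2" where
  "mult2 = bilinext (\<lambda>(a1, b1) (a2, b2). Poly_Mapping.single (graft a1 a2, graft b1 b2) 1)"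

definition mag_inj :: "('x \<Rightarrow>\<^sub>0 'k::comm_ring_1) \<Rightarrow> ('x, 'k) mag" where
  "mag_inj v = linext (\<lambda>x. Poly_Mapping.single (Some (Lf x)) 1) v"

fun mag_elt :: "pbtree \<Rightarrow> ('x \<Rightarrow>\<^sub>0 'k::comm_ring_1) list \<Rightarrow> ('x, 'k) mag" where
  "mag_elt (Lf _) vs = mag_inj (hd vs)"
| "mag_elt (Nd a b) vs =
     mag_mult (mag_elt a (take (nleaves a) vs)) (mag_elt b (drop (nleaves a) vs))"

fun DeltaT :: "'x ltree \<Rightarrow> ('x, 'k::comm_ring_1) mag2" where
  "DeltaT (Lf x) = Poly_Mapping.single (Some (Lf x), None) 1 + Poly_Mapping.single (None, Some (Lf x)) 1"
| "DeltaT (Nd a b) =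
     mult2 (DeltaT a) (tensor mag_one (mag_bas b))
   + mult2 (tensor (mag_bas a) mag_one) (DeltaT b)
   - tensor (mag_bas a) (mag_bas b)"

fun DeltaB :: "'x ltree option \<Rightarrow> ('x, 'k::comm_ring_1) mag2" where
  "DeltaB None = Poly_Mapping.single (None, None) 1"
| "DeltaB (Some t) = DeltaT t"

definition Delta :: "('x, 'k::comm_ring_1) mag \<Rightarrow> ('x, 'k) mag2" where
  "Delta = linext DeltaB"

definition delta :: "('x, 'k::comm_ring_1) mag \<Rightarrow> ('x, 'k) mag2" where
  "delta x = Delta x - tensor x mag_one - tensor mag_one x"

end

theory Submission imports Defs begin

lemma lookup_smul[simp]: "Poly_Mapping.lookup (smul c f) k = c * Poly_Mapping.lookup f k"
  by (simp add: smul_def Poly_Mapping.map.rep_eq when_def)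

lemma smul_add: "smul c (x + y) = smul c x + smul c y"
  by (rule poly_mapping_eqI) (simp add: lookup_add algebra_simps)
lemma smul_add_left: "smul (c + d) x = smul c x + smul d x"
  by (rule poly_mapping_eqI) (simp add: lookup_add algebra_simps)
lemma smul_smul: "smul c (smul d x) = smul (c * d) x"
  by (rule poly_mapping_eqI) (simp add: algebra_simps)
lemma smul_0[simp]: "smul 0 x = 0"
  by (rule poly_mapping_eqI) simp
lemma smul_zero[simp]: "smul c 0 = 0"
  by (rule poly_mapping_eqI) simp
lemma smul_1[simp]: "smul 1 x = x"
  by (rule poly_mapping_eqI) simp
lemma smul_sum: "smul c (sum f A) = (\<Sum>a\<in>A. smul c (f a))"
  by (rule poly_mapping_eqI) (simp add: lookup_sum sum_distrib_left)
lemma keys_smul: "Poly_Mapping.keys (smul c x) \<subseteq> Poly_Mapping.keys x"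
  by (auto simp: in_keys_iff)

lemma linext_superset:
  assumes "finite A" "Poly_Mapping.keys f \<subseteq> A"
  shows "linext g f = (\<Sum>b\<in>A. smul (Poly_Mapping.lookup f b) (g b))"
  unfolding linext_def
  by (rule sum.mono_neutral_left) (use assms in \<open>auto simp: in_keys_iff\<close>)

lemma linext_single[simp]: "linext g (Poly_Mapping.single a (1::'k::comm_ring_1)) = g a"
  by (simp add: linext_def)

definition lin :: "(('a \<Rightarrow>\<^sub>0 'k::comm_ring_1) \<Rightarrow> ('b \<Rightarrow>\<^sub>0 'k)) \<Rightarrow> bool" where
  "lin L \<longleftrightarrow> (\<forall>x y. L (x + y) = L x + L y) \<and> (\<forall>c x. L (smul c x) = smul c (L x))"

lemma lin_linext: "lin (linext g)"
  unfolding lin_def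
proof (intro conjI allI)
  fix x y
  have "linext g (x + y) = (\<Sum>b\<in>Poly_Mapping.keys x \<union> Poly_Mapping.keys y. smul (Poly_Mapping.lookup (x+y) b) (g b))"
    by (rule linext_superset) (auto simp: keys_add)
  also have "\<dots> = (\<Sum>b\<in>Poly_Mapping.keys x \<union> Poly_Mapping.keys y. smul (Poly_Mapping.lookup x b) (g b)) + (\<Sum>b\<in>Poly_Mapping.keys x \<union> Poly_Mapping.keys y. smul (Poly_Mapping.lookup y b) (g b))"
    by (simp add: lookup_add smul_add_left sum.distrib)
  also have "\<dots> = linext g x + linext g y"
  proof -
    have "linext g x = (\<Sum>b\<in>Poly_Mapping.keys x \<union> Poly_Mapping.keys y. smul (Poly_Mapping.lookup x b) (g b))"
      by (rule linext_superset) auto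
    moreover have "linext g y = (\<Sum>b\<in>Poly_Mapping.keys x \<union> Poly_Mapping.keys y. smul (Poly_Mapping.lookup y b) (g b))"
      by (rule linext_superset) auto
    ultimately show ?thesis by simp
  qed
  finally show "linext g (x + y) = linext g x + linext g y" .
next
  fix c x
  have "linext g (smul c x) = (\<Sum>b\<in>Poly_Mapping.keys x. smul (Poly_Mapping.lookup (smul c x) b) (g b))"
    by (rule linext_superset) (auto simp: keys_smul)
  also have "\<dots> = smul c (linext g x)"
    by (simp add: linext_def smul_sum smul_smul)
  finally show "linext g (smul c x) = smul c (linext g x)" .
qed

lemma lin_zero: "lin L \<Longrightarrow> L 0 = 0"
  unfolding lin_def by (metis smul_0)

lemma lin_sum: "lin L \<Longrightarrow> L (sum f A) = (\<Sum>a\<in>A. L (f a))"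
  by (induction A rule: infinite_finite_induct) (auto simp: lin_zero lin_def)

lemma lin_minus: "lin L \<Longrightarrow> L (x - y) = L x - L y"
  unfolding lin_def by (metis add_diff_cancel eq_diff_eq)

lemma pm_repr: "f = (\<Sum>a\<in>Poly_Mapping.keys f. smul (Poly_Mapping.lookup f a) (Poly_Mapping.single a (1::'k::comm_ring_1)))"
proof (rule poly_mapping_eqI)
  fix k
  show "Poly_Mapping.lookup f k = Poly_Mapping.lookup (\<Sum>a\<in>Poly_Mapping.keys f. smul (Poly_Mapping.lookup f a) (Poly_Mapping.single a 1)) k"
    by (cases "k \<in> Poly_Mapping.keys f") (auto simp: lookup_sum lookup_single when_def in_keys_iff if_distrib[where f="\<lambda>z. _ * z"] cong: if_cong)
qed

lemma lin_eq_linext: "lin L \<Longrightarrow> L x = linext (\<lambda>a. L (Poly_Mapping.single a 1)) x"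
  apply (subst pm_repr[of x])
  apply (simp add: lin_sum linext_def)
  apply (simp add: lin_def)
  done

lemma lin_basis_eq:
  assumes "lin L" "lin M" "\<And>a. L (Poly_Mapping.single a 1) = M (Poly_Mapping.single a 1)"
  shows "L = M"
proof
  fix x show "L x = M x"
    using lin_eq_linext[OF assms(1), of x] lin_eq_linext[OF assms(2), of x] assms(3) by simp
qed

lemma lin_id[intro]: "lin (\<lambda>x. x)" by (simp add: lin_def)
lemma lin_comp: "lin L \<Longrightarrow> lin M \<Longrightarrow> lin (\<lambda>x. L (M x))" by (simp add: lin_def)
lemma lin_add[intro]: "lin L \<Longrightarrow> lin M \<Longrightarrow> lin (\<lambda>x. L x + M x)"
  by (simp add: lin_def smul_add)
lemma lin_diff[intro]: "lin L \<Longrightarrow> lin M \<Longrightarrow> lin (\<lambda>x. L x - M x)"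
proof -
  assume a: "lin L" "lin M"
  have s: "smul c (u - v) = smul c u - smul c v" for c u v
    by (rule poly_mapping_eqI) (simp add: lookup_minus algebra_simps)
  show ?thesis using a unfolding lin_def by (simp add: s)
qed
lemma lin_sumf: "(\<And>i. lin (L i)) \<Longrightarrow> lin (\<lambda>x. \<Sum>i\<in>A. L i x)"
  unfolding lin_def
  by (auto simp: sum.distrib smul_sum)
lemma lin_smulf: "lin L \<Longrightarrow> lin (\<lambda>x. smul c (L x))"
  unfolding lin_def by (simp add: smul_add smul_smul mult.commute)

lemma lin_bilinext1: "lin (\<lambda>x. bilinext g x y)"
  unfolding bilinext_def by (rule lin_linext)
lemma bilinext_expand: "bilinext g x y = (\<Sum>b\<in>Poly_Mapping.keys x. smul (Poly_Mapping.lookup x b) (linext (g b) y))"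
  by (simp add: bilinext_def linext_def)
lemma lin_bilinext2: "lin (\<lambda>y. bilinext g x y)"
  unfolding bilinext_expand
  by (intro lin_sumf lin_smulf lin_linext)

lemma bilinext_single[simp]:
  "bilinext g (Poly_Mapping.single a 1) (Poly_Mapping.single b 1) = g a b"
  by (simp add: bilinext_def)


lemma lin_mult2_1: "lin M \<Longrightarrow> lin (\<lambda>x. mult2 (M x) z)"
  unfolding mult2_def by (rule lin_comp[OF lin_bilinext1])
lemma lin_mult2_2: "lin M \<Longrightarrow> lin (\<lambda>x. mult2 z (M x))"
  unfolding mult2_def by (rule lin_comp[OF lin_bilinext2])
lemma lin_tensor_1: "lin M \<Longrightarrow> lin (\<lambda>x. tensor (M x) z)"
  unfolding tensor_def by (rule lin_comp[OF lin_bilinext1])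
lemma lin_tensor_2: "lin M \<Longrightarrow> lin (\<lambda>x. tensor z (M x))"
  unfolding tensor_def by (rule lin_comp[OF lin_bilinext2])
lemma lin_mag_mult_1: "lin M \<Longrightarrow> lin (\<lambda>x. mag_mult (M x) z)"
  unfolding mag_mult_def by (rule lin_comp[OF lin_bilinext1])
lemma lin_mag_mult_2: "lin M \<Longrightarrow> lin (\<lambda>x. mag_mult z (M x))"
  unfolding mag_mult_def by (rule lin_comp[OF lin_bilinext2])
lemma lin_Delta: "lin M \<Longrightarrow> lin (\<lambda>x. Delta (M x))"
  unfolding Delta_def by (rule lin_comp[OF lin_linext])
lemma lin_mag_inj: "lin M \<Longrightarrow> lin (\<lambda>x. mag_inj (M x))"
  unfolding mag_inj_def by (rule lin_comp[OF lin_linext])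

lemmas linI = lin_id lin_add lin_diff lin_mult2_1 lin_mult2_2 lin_tensor_1 lin_tensor_2 lin_mag_mult_1 lin_mag_mult_2 lin_Delta lin_mag_inj

lemma graft_None2[simp]: "graft x None = x"
  by (cases x) auto

lemma mag_mult_single[simp]:
  "mag_mult (Poly_Mapping.single a 1) (Poly_Mapping.single b 1) = Poly_Mapping.single (graft a b) (1::'k::comm_ring_1)"
  by (simp add: mag_mult_def)
lemma tensor_single[simp]:
  "tensor (Poly_Mapping.single a 1) (Poly_Mapping.single b 1) = Poly_Mapping.single (a, b) (1::'k::comm_ring_1)"
  by (simp add: tensor_def)
lemma mult2_single[simp]:
  "mult2 (Poly_Mapping.single p 1) (Poly_Mapping.single q 1) = Poly_Mapping.single (graft (fst p) (fst q), graft (snd p) (snd q)) (1::'k::comm_ring_1)"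
  by (cases p; cases q) (simp add: mult2_def)
lemma Delta_single[simp]: "Delta (Poly_Mapping.single a (1::'k::comm_ring_1)) = DeltaB a"
  by (simp add: Delta_def)

lemma mag_mult_one_left[simp]: "mag_mult mag_one y = (y :: ('x,'k::comm_ring_1) mag)"
proof -
  have "(\<lambda>y. mag_mult mag_one y) = (\<lambda>y::('x,'k) mag. y)"
    by (rule lin_basis_eq) (intro linI | simp add: mag_one_def)+
  then show ?thesis by metis
qed
lemma mag_mult_one_right[simp]: "mag_mult y mag_one = (y :: ('x,'k::comm_ring_1) mag)"
proof -
  have "(\<lambda>y. mag_mult y mag_one) = (\<lambda>y::('x,'k) mag. y)"
    by (rule lin_basis_eq) (intro linI | simp add: mag_one_def)+
  then show ?thesis by metis
qed
lemma mult2_one_left: "mult2 (Poly_Mapping.single (None,None) 1) y = (y :: ('x,'k::comm_ring_1) mag2)"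
proof -
  have "(\<lambda>y. mult2 (Poly_Mapping.single (None,None) 1) y) = (\<lambda>y::('x,'k) mag2. y)"
    by (rule lin_basis_eq) (intro linI | simp)+
  then show ?thesis by metis
qed
lemma mult2_one_right: "mult2 y (Poly_Mapping.single (None,None) 1) = (y :: ('x,'k::comm_ring_1) mag2)"
proof -
  have "(\<lambda>y. mult2 y (Poly_Mapping.single (None,None) 1)) = (\<lambda>y::('x,'k) mag2. y)"
    by (rule lin_basis_eq) (intro linI | simp)+
  then show ?thesis by metis
qed

lemma mult2_tensor:
  "mult2 (tensor A B) (tensor C D) = tensor (mag_mult A C) (mag_mult B (D :: ('x,'k::comm_ring_1) mag))"
proof -
  have 1: "mult2 (tensor (Poly_Mapping.single a 1) (Poly_Mapping.single b 1)) (tensor (Poly_Mapping.single c 1) D)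
     = tensor (mag_mult (Poly_Mapping.single a 1) (Poly_Mapping.single c 1)) (mag_mult (Poly_Mapping.single b 1) D)" for a b c
  proof -
    have "(\<lambda>D. mult2 (tensor (Poly_Mapping.single a 1) (Poly_Mapping.single b 1)) (tensor (Poly_Mapping.single c 1) D))
     = (\<lambda>D::('x,'k) mag. tensor (mag_mult (Poly_Mapping.single a 1) (Poly_Mapping.single c 1)) (mag_mult (Poly_Mapping.single b 1) D))"
      by (rule lin_basis_eq) (intro linI | simp)+
    then show ?thesis by metis
  qed
  have 2: "mult2 (tensor (Poly_Mapping.single a 1) (Poly_Mapping.single b 1)) (tensor C D)
     = tensor (mag_mult (Poly_Mapping.single a 1) C) (mag_mult (Poly_Mapping.single b 1) D)" for a b
  proof -
    have "(\<lambda>C. mult2 (tensor (Poly_Mapping.single a 1) (Poly_Mapping.single b 1)) (tensor C D))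
     = (\<lambda>C::('x,'k) mag. tensor (mag_mult (Poly_Mapping.single a 1) C) (mag_mult (Poly_Mapping.single b 1) D))"
      by (rule lin_basis_eq) (intro linI | simp only: 1)+
    then show ?thesis by metis
  qed
  have 3: "mult2 (tensor (Poly_Mapping.single a 1) B) (tensor C D)
     = tensor (mag_mult (Poly_Mapping.single a 1) C) (mag_mult B D)" for a
  proof -
    have "(\<lambda>B. mult2 (tensor (Poly_Mapping.single a 1) B) (tensor C D))
     = (\<lambda>B::('x,'k) mag. tensor (mag_mult (Poly_Mapping.single a 1) C) (mag_mult B D))"
      by (rule lin_basis_eq) (intro linI | simp only: 2)+
    then show ?thesis by metis
  qed
  have "(\<lambda>A. mult2 (tensor A B) (tensor C D)) = (\<lambda>A::('x,'k) mag. tensor (mag_mult A C) (mag_mult B D))"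
    by (rule lin_basis_eq) (intro linI | simp only: 3)+
  then show ?thesis by metis
qed

lemma DeltaB_graft:
  "DeltaB (graft a b) = mult2 (DeltaB a) (Poly_Mapping.single (None, b) 1)
     + mult2 (Poly_Mapping.single (a, None) 1) (DeltaB b) - Poly_Mapping.single (a, b) (1::'k::comm_ring_1)"
proof (cases a)
  case None
  then show ?thesis by (simp add: mult2_one_left)
next
  case (Some A)
  then show ?thesis
  proof (cases b)
    case None
    then show ?thesis using Some by (simp add: mult2_one_right)
  next
    case (Some B)
    then show ?thesis using \<open>a = Some A\<close> by (simp add: mag_one_def mag_bas_def)
  qed
qed

lemma Delta_mult:
  "Delta (mag_mult x y) = mult2 (Delta x) (tensor mag_one y) + mult2 (tensor x mag_one) (Delta y) - tensor x (y :: ('x,'k::comm_ring_1) mag)"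
proof -
  have 1: "Delta (mag_mult (Poly_Mapping.single a 1) y) = mult2 (Delta (Poly_Mapping.single a 1)) (tensor mag_one y) + mult2 (tensor (Poly_Mapping.single a 1) mag_one) (Delta y) - tensor (Poly_Mapping.single a 1) y" for a
  proof -
    have "(\<lambda>y. Delta (mag_mult (Poly_Mapping.single a 1) y)) = (\<lambda>y::('x,'k) mag. mult2 (Delta (Poly_Mapping.single a 1)) (tensor mag_one y) + mult2 (tensor (Poly_Mapping.single a 1) mag_one) (Delta y) - tensor (Poly_Mapping.single a 1) y)"
      by (rule lin_basis_eq) (intro linI | simp add: mag_one_def DeltaB_graft)+
    then show ?thesis by metis
  qed
  have "(\<lambda>x. Delta (mag_mult x y)) = (\<lambda>x::('x,'k) mag. mult2 (Delta x) (tensor mag_one y) + mult2 (tensor x mag_one) (Delta y) - tensor x y)"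
    by (rule lin_basis_eq) (intro linI | simp only: 1)+
  then show ?thesis by metis
qed

lemma Delta_inj: "Delta (mag_inj v) = tensor (mag_inj v) mag_one + tensor mag_one (mag_inj (v :: 'x \<Rightarrow>\<^sub>0 'k::comm_ring_1))"
proof -
  have "(\<lambda>v. Delta (mag_inj v)) = (\<lambda>v::'x \<Rightarrow>\<^sub>0 'k. tensor (mag_inj v) mag_one + tensor mag_one (mag_inj v))"
    by (rule lin_basis_eq) (intro linI | simp add: mag_inj_def mag_one_def)+
  then show ?thesis by metis
qed


lemma nleaves_pos: "nleaves t > 0"
  by (induction t) auto

lemma ltake_None: "ltake n t = None \<longleftrightarrow> n = 0"
  by (induction t arbitrary: n) (auto split: option.splits simp: nleaves_pos)

lemma ltake_full: "nleaves t \<le> n \<Longrightarrow> ltake n t = Some t"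
  apply (induction t arbitrary: n)
  subgoal by simp
  subgoal for t1 t2 n using nleaves_pos[of t1] nleaves_pos[of t2] by (auto split: option.splits)
  done

lemma nleaves_ltake: "ltake n t = Some c \<Longrightarrow> nleaves c = min n (nleaves t)"
  by (induction t arbitrary: n c) (auto split: option.splits if_splits simp: ltake_None)

lemma ldrop_None: "ldrop n t = None \<longleftrightarrow> nleaves t \<le> n"
  by (induction t arbitrary: n) (auto split: option.splits)

lemma ldrop_0: "ldrop 0 t = Some t"
  by (induction t) (auto simp: nleaves_pos)

lemma nleaves_ldrop: "ldrop n t = Some c \<Longrightarrow> nleaves c = nleaves t - n"
  by (induction t arbitrary: n c) (auto split: option.splits if_splits simp: ldrop_None)

theorem lemma1p6:
  fixes t :: pbtree and vs :: "('x \<Rightarrow>\<^sub>0 'k::field) list"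
  assumes "length vs = nleaves t"
  shows "delta (mag_elt t vs) =
    (\<Sum>i\<in>{1..<nleaves t}. tensor (mag_elt (split1 i t) (take i vs)) (mag_elt (split2 i t) (drop i vs)))"
  using assms
proof (induction t arbitrary: vs)
  case (Lf u)
  then show ?case by (simp add: delta_def Delta_inj)
next
  case (Nd a b)
  define p where "p = nleaves a"
  define q where "q = nleaves b"
  define X where "X = mag_elt a (take p vs)"
  define Y where "Y = mag_elt b (drop p vs)"
  have p0: "p > 0" and q0: "q > 0" by (simp_all add: p_def q_def nleaves_pos)
  have len: "length vs = p + q" using Nd.prems by (simp add: p_def q_def)
  have IHa: "delta X = (\<Sum>i\<in>{1..<p}. tensor (mag_elt (split1 i a) (take i (take p vs))) (mag_elt (split2 i a) (drop i (take p vs))))"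
    unfolding X_def p_def by (rule Nd.IH(1)) (use len p_def in simp)
  have IHb: "delta Y = (\<Sum>j\<in>{1..<q}. tensor (mag_elt (split1 j b) (take j (drop p vs))) (mag_elt (split2 j b) (drop j (drop p vs))))"
    unfolding Y_def q_def by (rule Nd.IH(2)) (use len q_def in simp)
  have elt: "mag_elt (Nd a b) vs = mag_mult X Y" by (simp add: X_def Y_def p_def)
  have DX: "Delta X = delta X + tensor X mag_one + tensor mag_one X" by (simp add: delta_def)
  have DY: "Delta Y = delta Y + tensor Y mag_one + tensor mag_one Y" by (simp add: delta_def)
  have l1: "lin (\<lambda>u. mult2 u (tensor mag_one Y))" by (intro linI)
  have l2: "lin (\<lambda>u. mult2 (tensor X mag_one) u)" by (intro linI)
  have m1: "mult2 (u + v) w = mult2 u w + mult2 v w" for u v w :: "('x,'k) mag2"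
    using lin_mult2_1[OF lin_id, of w] unfolding lin_def by blast
  have m2: "mult2 w (u + v) = mult2 w u + mult2 w v" for u v w :: "('x,'k) mag2"
    using lin_mult2_2[OF lin_id, of w] unfolding lin_def by blast
  have oo: "tensor mag_one mag_one = Poly_Mapping.single (None, None) (1::'k)"
    by (simp add: mag_one_def)
  have step: "delta (mag_mult X Y) = mult2 (delta X) (tensor mag_one Y) + mult2 (tensor X mag_one) (delta Y) + tensor X Y"
    unfolding delta_def[of "mag_mult X Y"] Delta_mult DX DY
    by (simp add: m1 m2 mult2_tensor algebra_simps)
  define F where "F i = tensor (mag_elt (split1 i (Nd a b)) (take i vs)) (mag_elt (split2 i (Nd a b)) (drop i vs))" for i
  have sumsplit: "sum F {1..<p+q} = sum F {1..<p} + F p + (\<Sum>j\<in>{1..<q}. F (p+j))"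
  proof -
    have "sum F {1..<p+q} = sum F {1..<p} + sum F {p..<p+q}"
      using p0 by (simp add: sum.atLeastLessThan_concat)
    moreover have "sum F {p..<p+q} = F p + sum F {Suc p..<p+q}"
      using q0 by (simp add: sum.atLeast_Suc_lessThan)
    moreover have "sum F {Suc p..<p+q} = (\<Sum>j\<in>{1..<q}. F (p+j))"
    proof -
      have "sum F {Suc p..<p+q} = sum F {1+p..<q+p}" by (simp add: add.commute)
      also have "\<dots> = (\<Sum>j\<in>{1..<q}. F (j+p))" by (rule sum.shift_bounds_nat_ivl)
      finally show ?thesis by (simp add: add.commute)
    qed
    ultimately show ?thesis by simp
  qed
  have Fi: "F i = tensor (mag_elt (split1 i a) (take i (take p vs))) (mag_mult (mag_elt (split2 i a) (drop i (take p vs))) Y)"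
    if hi: "1 \<le> i" "i < p" for i
  proof -
    obtain c where c: "ldrop i a = Some c" using ldrop_None[of i a] hi p_def by (cases "ldrop i a") auto
    have nc: "nleaves c = p - i" using nleaves_ldrop[OF c] p_def by simp
    have s1: "split1 i (Nd a b) = split1 i a" using that by (simp add: split1_def p_def)
    have s2: "split2 i (Nd a b) = Nd c b" using that c by (simp add: split2_def p_def)
    have s3: "split2 i a = c" using c by (simp add: split2_def)
    have t1: "take (p - i) (drop i vs) = drop i (take p vs)" using that by (simp add: take_drop add.commute)
    have t2: "drop (p - i) (drop i vs) = drop p vs" using that by simp
    show ?thesis using that unfolding F_def s1 s2 s3 Y_def by (simp add: nc t1 t2)
  qed
  have Fp: "F p = tensor X Y"
    unfolding F_def X_def Y_def by (simp add: split1_def split2_def p_def ltake_full ldrop_0)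
  have Fj: "F (p+j) = tensor (mag_mult X (mag_elt (split1 j b) (take j (drop p vs)))) (mag_elt (split2 j b) (drop j (drop p vs)))"
    if hj: "1 \<le> j" "j < q" for j
  proof -
    obtain c where c: "ltake j b = Some c" using ltake_None[of j b] hj by (cases "ltake j b") auto
    have nc: "nleaves c = j" using nleaves_ltake[OF c] that q_def by simp
    have s1: "split1 (p+j) (Nd a b) = Nd a c" using that c by (simp add: split1_def p_def)
    have s2: "split2 (p+j) (Nd a b) = split2 j b" using that by (simp add: split2_def p_def)
    have s3: "split1 j b = c" using c by (simp add: split1_def)
    have t1: "drop p (take (j + p) vs) = take j (drop p vs)" by (simp add: take_drop add.commute)
    show ?thesis unfolding F_def s1 s2 s3 X_def by (simp add: nc t1 p_def[symmetric] drop_drop add.commute)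
  qed
  have A: "mult2 (delta X) (tensor mag_one Y) = (\<Sum>i\<in>{1..<p}. F i)"
    unfolding IHa lin_sum[OF l1] by (rule sum.cong) (auto simp: Fi mult2_tensor)
  have B: "mult2 (tensor X mag_one) (delta Y) = (\<Sum>j\<in>{1..<q}. F (p+j))"
    unfolding IHb lin_sum[OF l2] by (rule sum.cong) (auto simp: Fj mult2_tensor)
  have R: "(\<Sum>i\<in>{1..<nleaves (Nd a b)}. tensor (mag_elt (split1 i (Nd a b)) (take i vs)) (mag_elt (split2 i (Nd a b)) (drop i vs))) = sum F {1..<p+q}"
    by (simp add: F_def p_def q_def)
  show ?case
    unfolding R elt step A B sumsplit Fp by (simp add: algebra_simps)
qed
end
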